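(* Let $K\in\mathbb{N}^+$ and let $\varrho:\mathbb{R}\to\mathbb{R}$ be real analytic and not a polynomial on an interval $(\alpha,\beta)$ with $\beta>\alpha$. Then there exists $w_0\in\big(-\tfrac{\beta-\alpha}{2K},\tfrac{\beta-\alpha}{2K}\big)$ such that the numbers $\varrho\big(\tfrac{\alpha+\beta}{2}+kw_0\big)$, $k=1,2,\dots,K$, are rationally independent.
   Context: Real numbers $a_1,\dots,a_K$ are rationally independent if the only $(\lambda_1,\dots,\lambda_K)\in\mathbb{Q}^K$ with $\sum_{k=1}^K\lambda_k a_k=0$ is $(0,\dots,0)$. *)

theory Defs
  imports "HOL-Analysis.Analysis" "HOL-Computational_Algebra.Polynomial"
begin

definition real_analytic_on :: "(real \<Rightarrow> real) \<Rightarrow> real set \<Rightarrow> bool" where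
  "real_analytic_on f S \<longleftrightarrow>
     (\<forall>x0\<in>S. \<exists>r>0. \<exists>c::nat \<Rightarrow> real.
        \<forall>y. \<bar>y - x0\<bar> < r \<longrightarrow> (\<lambda>n. c n * (y - x0) ^ n) sums f y)"

definition polynomial_on :: "(real \<Rightarrow> real) \<Rightarrow> real set \<Rightarrow> bool" where
  "polynomial_on f S \<longleftrightarrow> (\<exists>p :: real poly. \<forall>x\<in>S. f x = poly p x)"

definition rationally_independent :: "nat \<Rightarrow> (nat \<Rightarrow> real) \<Rightarrow> bool" where
  "rationally_independent K a \<longleftrightarrow>
     (\<forall>l :: nat \<Rightarrow> real. (\<forall>k\<in>{1..K}. l k \<in> \<rat>) \<and> (\<Sum>k=1..K. l k * a k) = 0
        \<longrightarrow> (\<forall>k\<in>{1..K}. l k = 0))"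

end

theory Submission
  imports Defs "HOL-Complex_Analysis.Cauchy_Integral_Formula"
begin

lemma local_zero:
  fixes g :: "real \<Rightarrow> real" and c :: "nat \<Rightarrow> real"
  assumes sm: "\<And>y. \<bar>y - x\<bar> < r \<Longrightarrow> (\<lambda>n. c n * (y - x)^n) sums g y" and r: "r > 0"
    and lim: "x islimpt {y. g y = 0}"
  shows "\<exists>e>0. \<forall>y. \<bar>y-x\<bar> < e \<longrightarrow> g y = 0"
proof -
  define h where "h t = (\<Sum>n. c n * t^n)" for t
  have hg: "g y = h (y - x)" if "\<bar>y-x\<bar> < r" for y
    using sm[OF that] unfolding h_def by (simp add: sums_iff)
  have h0: "h 0 = c 0" unfolding h_def using powser_sums_zero[of c] by (simp add: sums_iff)
  have "summable (\<lambda>n. c n * (r/2)^n)" using sm[of "x + r/2"] r by (simp add: sums_iff)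
  then have ch: "isCont h 0" unfolding h_def using isCont_powser[of c "r/2" 0] r by simp
  obtain s where s: "\<forall>n. s n \<in> {y. g y = 0} - {x}" "s \<longlonglongrightarrow> x"
    using lim islimpt_sequential by blast
  have "(\<lambda>n. s n - x) \<longlonglongrightarrow> 0" using s(2) by (simp add: LIM_zero)
  then have t1: "(\<lambda>n. h (s n - x)) \<longlonglongrightarrow> h 0" using ch isCont_tendsto_compose by blast
  have "eventually (\<lambda>n. \<bar>s n - x\<bar> < r) sequentially"
    using s(2) r unfolding tendsto_iff dist_real_def by blast
  then have "eventually (\<lambda>n. h (s n - x) = 0) sequentially"
    proof eventually_elim
    case (elim n)
    then have "g (s n) = h (s n - x)" by (rule hg)
    then show ?case using s(1) by simp
  qed
  then have "(\<lambda>n. h (s n - x)) \<longlonglongrightarrow> 0"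
    by (simp add: tendsto_eventually)
  with t1 have "h 0 = 0" using LIMSEQ_unique by blast
  then have c0: "c 0 = 0" using h0 by simp
  have gx: "g x = 0" using hg[of x] r h0 c0 by simp
  show ?thesis
  proof (cases "\<exists>m>0. c m \<noteq> 0")
    case True
    then obtain m where m: "m > 0" "c m \<noteq> 0" by blast
    obtain e where e: "0 < e" "\<And>z. z \<in> cball x e - {x} \<Longrightarrow> g z \<noteq> 0"
      using powser_0_nonzero[of r x c g m] r sm gx m by (auto simp: real_norm_def)
    obtain y where "y \<in> {y. g y = 0}" "y \<noteq> x" "dist y x < e"
      using lim e(1) unfolding islimpt_approachable by blast
    then have False using e(2)[of y] by (auto simp: dist_commute less_imp_le)
    then show ?thesis ..
  next
    case False
    with c0 have "\<forall>n. c n = 0" by (metis gr0I)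
    then have "g y = 0" if "\<bar>y-x\<bar> < r" for y
      using sm[OF that] by (simp add: sums_iff)
    then show ?thesis using r by blast
  qed
qed

lemma analytic_dichotomy:
  assumes an: "real_analytic_on g {a<..<b}"
  shows "(\<forall>x\<in>{a<..<b}. g x = 0) \<or> countable {x\<in>{a<..<b}. g x = 0}"
proof -
  define I where "I = {a<..<b}"
  define Z where "Z = {x\<in>I. g x = 0}"
  have loc: "\<exists>e>0. \<forall>y. \<bar>y-x\<bar> < e \<longrightarrow> g y = 0" if xI: "x \<in> I" and lp: "x islimpt Z" for x
  proof -
    have ex: "\<exists>r>0. \<exists>c::nat\<Rightarrow>real. \<forall>y. \<bar>y - x\<bar> < r \<longrightarrow> (\<lambda>n. c n * (y - x)^n) sums g y"
      using an xI unfolding real_analytic_on_def I_def by simp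
    then obtain r and c :: "nat \<Rightarrow> real" where r0: "r > 0" and sm0: "\<forall>y. \<bar>y - x\<bar> < r \<longrightarrow> (\<lambda>n. c n * (y - x)^n) sums g y"
      by blast
    have sm: "\<And>y. \<bar>y - x\<bar> < r \<Longrightarrow> (\<lambda>n. c n * (y - x)^n) sums g y" using sm0 by simp
    have lp': "x islimpt {y. g y = 0}"
    proof (rule islimpt_subset[OF lp])
      show "Z \<subseteq> {y. g y = 0}" unfolding Z_def by blast
    qed
    show ?thesis by (rule local_zero[OF sm r0 lp'])
  qed
  show ?thesis
  proof (cases "\<exists>x\<in>I. x islimpt Z")
    case False
    then have "Z sparse_in I" using sparse_in_open[of I Z] unfolding I_def by auto
    then have "countable (I \<inter> Z)" using sparse_imp_countable[of I Z] unfolding I_def by auto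
    moreover have "I \<inter> Z = Z" unfolding Z_def by auto
    ultimately show ?thesis unfolding Z_def I_def by simp
  next
    case True
    define A where "A = {x\<in>I. \<exists>e>0. \<forall>y. \<bar>y-x\<bar> < e \<longrightarrow> g y = 0}"
    obtain x0 where x0: "x0 \<in> I" "x0 islimpt Z" using True by blast
    have "x0 \<in> A" using loc[OF x0] x0(1) unfolding A_def by simp
    then have "A \<noteq> {}" by blast
    have oA: "open A" unfolding open_dist
    proof
      fix x assume "x \<in> A"
      then obtain e where e: "e > 0" "\<forall>y. \<bar>y-x\<bar> < e \<longrightarrow> g y = 0" "a < x" "x < b"
        unfolding A_def I_def by auto
      define e' where "e' = min e (min (x - a) (b - x))"
      have "e' > 0" using e unfolding e'_def by auto
      moreover have "\<forall>y. dist y x < e' \<longrightarrow> y \<in> A"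
      proof (intro allI impI)
        fix y assume "dist y x < e'"
        then have y: "\<bar>y - x\<bar> < e'" by (simp add: dist_real_def)
        then have "y \<in> I" unfolding I_def e'_def by auto
        moreover have "\<forall>z. \<bar>z-y\<bar> < e' - \<bar>y - x\<bar> \<longrightarrow> g z = 0"
          using e(2) y unfolding e'_def by auto
        moreover have "e' - \<bar>y - x\<bar> > 0" using y by simp
        ultimately show "y \<in> A" unfolding A_def by blast
      qed
      ultimately show "\<exists>e>0. \<forall>y. dist y x < e \<longrightarrow> y \<in> A" by blast
    qed
    have oB: "open (I - A)" unfolding open_dist
    proof
      fix x assume x: "x \<in> I - A"
      then have "\<not> x islimpt Z" using loc[of x] unfolding A_def by auto
      then obtain e where e: "e > 0" "\<forall>y\<in>Z. y \<noteq> x \<longrightarrow> \<not> dist y x < e"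
        unfolding islimpt_approachable by blast
      have xab: "a < x" "x < b" using x unfolding I_def by auto
      define e' where "e' = min e (min (x - a) (b - x))"
      have "e' > 0" using e xab unfolding e'_def by auto
      moreover have "\<forall>y. dist y x < e' \<longrightarrow> y \<in> I - A"
      proof (intro allI impI)
        fix y assume "dist y x < e'"
        then have y: "\<bar>y - x\<bar> < e'" by (simp add: dist_real_def)
        then have yI: "y \<in> I" unfolding I_def e'_def by auto
        show "y \<in> I - A"
        proof (cases "y = x")
          case True then show ?thesis using x by simp
        next
          case False
          show ?thesis
          proof (rule DiffI[OF yI], rule notI)
            assume "y \<in> A"
            then have "g y = 0" unfolding A_def by force
            then have "y \<in> Z" using yI unfolding Z_def by simp
            then show False using e(2) False y unfolding e'_def dist_real_def by auto
          qed
        qed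
      qed
      ultimately show "\<exists>e>0. \<forall>y. dist y x < e \<longrightarrow> y \<in> I - A" by blast
    qed
    have "connected I" unfolding I_def by simp
    have AI: "A \<subseteq> I" unfolding A_def by blast
    have "A \<inter> I = {} \<or> (I - A) \<inter> I = {}"
      by (rule connectedD[OF \<open>connected I\<close> oA oB]) auto
    then have "I - A = {}" using \<open>A \<noteq> {}\<close> AI by blast
    then have "\<forall>x\<in>I. x \<in> A" by blast
    then have "\<forall>x\<in>I. g x = 0" unfolding A_def by fastforce
    then show ?thesis unfolding I_def by blast
  qed
qed

lemma ra_get:
  assumes "real_analytic_on f S" "x0 \<in> S"
  obtains r c where "r > 0" "\<forall>y. \<bar>y - x0\<bar> < r \<longrightarrow> (\<lambda>n. c n * (y - x0)^n) sums f y"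
proof -
  have "\<exists>r>0. \<exists>c::nat\<Rightarrow>real. \<forall>y. \<bar>y - x0\<bar> < r \<longrightarrow> (\<lambda>n. c n * (y - x0)^n) sums f y"
    using assms unfolding real_analytic_on_def by simp
  then show ?thesis using that by blast
qed

lemma ra_add:
  assumes "real_analytic_on f S" "real_analytic_on g S"
  shows "real_analytic_on (\<lambda>x. f x + g x) S"
  unfolding real_analytic_on_def
proof
  fix x0 assume x0: "x0 \<in> S"
  obtain r1 c1 where r1: "r1 > 0" "\<forall>y. \<bar>y - x0\<bar> < r1 \<longrightarrow> (\<lambda>n. c1 n * (y - x0)^n) sums f y"
    using ra_get[OF assms(1) x0] by metis
  obtain r2 c2 where r2: "r2 > 0" "\<forall>y. \<bar>y - x0\<bar> < r2 \<longrightarrow> (\<lambda>n. c2 n * (y - x0)^n) sums g y"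
    using ra_get[OF assms(2) x0] by metis
  have "\<forall>y. \<bar>y - x0\<bar> < min r1 r2 \<longrightarrow> (\<lambda>n. (c1 n + c2 n) * (y - x0)^n) sums (f y + g y)"
    using r1(2) r2(2) by (auto simp: distrib_right intro!: sums_add)
  moreover have "min r1 r2 > 0" using r1 r2 by simp
  ultimately show "\<exists>r>0. \<exists>c. \<forall>y. \<bar>y - x0\<bar> < r \<longrightarrow> (\<lambda>n. c n * (y - x0) ^ n) sums (f y + g y)"
    by (intro exI[of _ "min r1 r2"] conjI exI[of _ "\<lambda>n. c1 n + c2 n"])
qed

lemma ra_cmult:
  assumes "real_analytic_on f S"
  shows "real_analytic_on (\<lambda>x. l * f x) S"
  unfolding real_analytic_on_def
proof
  fix x0 assume x0: "x0 \<in> S"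
  obtain r1 c1 where r1: "r1 > 0" "\<forall>y. \<bar>y - x0\<bar> < r1 \<longrightarrow> (\<lambda>n. c1 n * (y - x0)^n) sums f y"
    using ra_get[OF assms(1) x0] by metis
  have "\<forall>y. \<bar>y - x0\<bar> < r1 \<longrightarrow> (\<lambda>n. (l * c1 n) * (y - x0)^n) sums (l * f y)"
    using r1(2) by (auto simp: mult.assoc intro!: sums_mult)
  then show "\<exists>r>0. \<exists>c. \<forall>y. \<bar>y - x0\<bar> < r \<longrightarrow> (\<lambda>n. c n * (y - x0) ^ n) sums (l * f y)"
    using r1(1) by (intro exI[of _ r1] conjI exI[of _ "\<lambda>n. l * c1 n"])
qed

lemma ra_zero: "real_analytic_on (\<lambda>x. 0) S"
  unfolding real_analytic_on_def
proof
  fix x0 assume "x0 \<in> S"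
  have "\<forall>y. \<bar>y - x0\<bar> < 1 \<longrightarrow> (\<lambda>n. (0::real) * (y - x0)^n) sums 0" by simp
  then show "\<exists>r>0. \<exists>c. \<forall>y. \<bar>y - x0\<bar> < r \<longrightarrow> (\<lambda>n. c n * (y - x0) ^ n) sums 0"
    by (intro exI[of _ 1]) (auto intro!: exI[of _ "\<lambda>_. 0"])
qed

lemma ra_sum:
  assumes "finite A" "\<And>i. i \<in> A \<Longrightarrow> real_analytic_on (f i) S"
  shows "real_analytic_on (\<lambda>x. \<Sum>i\<in>A. f i x) S"
  using assms
proof (induction A rule: finite_induct)
  case empty
  then show ?case using ra_zero by simp
next
  case (insert a F)
  then show ?case by (simp add: ra_add)
qed

lemma ra_affine:
  assumes "real_analytic_on f S" "k \<noteq> 0" "\<And>w. w \<in> T \<Longrightarrow> c + k * w \<in> S"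
  shows "real_analytic_on (\<lambda>w. f (c + k * w)) T"
  unfolding real_analytic_on_def
proof
  fix w0 assume w0: "w0 \<in> T"
  obtain r1 c1 where r1: "r1 > 0" "\<forall>y. \<bar>y - (c + k * w0)\<bar> < r1 \<longrightarrow> (\<lambda>n. c1 n * (y - (c + k * w0))^n) sums f y"
    using ra_get[OF assms(1) assms(3)[OF w0]] by metis
  have "(\<lambda>n. (c1 n * k ^ n) * (w - w0)^n) sums f (c + k * w)" if "\<bar>w - w0\<bar> < r1 / \<bar>k\<bar>" for w
  proof -
    have "\<bar>k\<bar> * \<bar>w - w0\<bar> < r1" using that assms(2) by (simp add: field_simps)
    then have "\<bar>(c + k * w) - (c + k * w0)\<bar> < r1" by (simp add: abs_mult[symmetric] algebra_simps)
    then have "(\<lambda>n. c1 n * ((c + k * w) - (c + k * w0))^n) sums f (c + k * w)" by (rule mp[OF spec[OF r1(2)]])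
    moreover have "(c + k * w) - (c + k * w0) = k * (w - w0)" by (simp add: algebra_simps)
    ultimately show ?thesis by (simp add: power_mult_distrib mult.assoc)
  qed
  moreover have "r1 / \<bar>k\<bar> > 0" using r1(1) assms(2) by simp
  ultimately show "\<exists>r>0. \<exists>ca. \<forall>y. \<bar>y - w0\<bar> < r \<longrightarrow> (\<lambda>n. ca n * (y - w0) ^ n) sums f (c + k * y)"
    by (intro exI[of _ "r1 / \<bar>k\<bar>"] conjI exI[of _ "\<lambda>n. c1 n * k ^ n"]) auto
qed

lemma ra_poly: "real_analytic_on (poly p) S"
  unfolding real_analytic_on_def
proof
  fix x0 assume "x0 \<in> S"
  define q where "q = pcompose p [:x0, 1:]"
  have "(\<lambda>n. coeff q n * (y - x0)^n) sums poly p y" for y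
  proof -
    have "(\<lambda>n. coeff q n * (y - x0)^n) sums (\<Sum>n\<in>{..degree q}. coeff q n * (y - x0)^n)"
      by (rule sums_finite) (auto simp: coeff_eq_0)
    moreover have "(\<Sum>n\<in>{..degree q}. coeff q n * (y - x0)^n) = poly q (y - x0)"
      by (simp add: poly_altdef)
    moreover have "poly q (y - x0) = poly p y" unfolding q_def by (simp add: poly_pcompose)
    ultimately show ?thesis by simp
  qed
  then show "\<exists>r>0. \<exists>c. \<forall>y. \<bar>y - x0\<bar> < r \<longrightarrow> (\<lambda>n. c n * (y - x0) ^ n) sums poly p y"
    by (intro exI[of _ 1] conjI exI[of _ "coeff q"]) auto
qed

lemma powser_unique0:
  fixes b :: "nat \<Rightarrow> real"
  assumes d: "d > 0" and sm: "\<And>w. \<bar>w\<bar> < d \<Longrightarrow> (\<lambda>n. b n * w^n) sums 0"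
  shows "b n = 0"
proof (rule ccontr)
  assume bn: "b n \<noteq> 0"
  have "(\<lambda>n. b n * 0^n) sums 0" using sm[of 0] d by simp
  then have b0: "b 0 = 0" using powser_sums_zero[of b] sums_unique2 by blast
  then have n0: "n > 0" using bn by (cases n) auto
  have sm': "\<And>x. norm (x - 0) < d \<Longrightarrow> (\<lambda>n. b n * (x - 0)^n) sums ((\<lambda>_. 0::real) x)"
    using sm by simp
  show False
  proof (rule powser_0_nonzero[of d 0 b "\<lambda>_. 0" n, OF d sm' _ bn n0])
    show "(\<lambda>_. 0::real) 0 = 0" by simp
  next
    fix s :: real assume s: "0 < s" "\<And>z::real. z \<in> cball 0 s - {0} \<Longrightarrow> (\<lambda>_. 0::real) z \<noteq> 0"
    have "s \<in> cball 0 s - {0}" using s(1) by auto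
    then have "(\<lambda>_. 0::real) s \<noteq> 0" by (rule s(2))
    then show False by simp
  qed
qed

lemma P_eventually:
  fixes l :: "nat \<Rightarrow> real"
  assumes k0: "k0 \<in> {1..K}" "l k0 \<noteq> 0"
  shows "\<exists>N. \<forall>n\<ge>N. (\<Sum>k=1..K. l k * real k ^ n) \<noteq> 0"
proof -
  define M where "M = {k\<in>{1..K}. l k \<noteq> 0}"
  define m where "m = Max M"
  have fM: "finite M" unfolding M_def by simp
  have "k0 \<in> M" using k0 unfolding M_def by simp
  then have neM: "M \<noteq> {}" by blast
  have mM: "m \<in> M" unfolding m_def using fM neM by (rule Max_in)
  then have m1: "1 \<le> m" "m \<le> K" "l m \<noteq> 0" unfolding M_def by auto
  have big: "l k = 0" if "k \<in> {1..K}" "k > m" for k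
  proof (rule ccontr)
    assume "l k \<noteq> 0"
    then have "k \<in> M" using that unfolding M_def by simp
    then have "k \<le> m" unfolding m_def using fM by simp
    then show False using that by simp
  qed
  have lim: "(\<lambda>n. \<Sum>k\<in>{1..K}. l k * (real k / real m)^n) \<longlonglongrightarrow> (\<Sum>k\<in>{1..K}. if k = m then l m else 0)"
  proof (rule tendsto_sum)
    fix k assume k: "k \<in> {1..K}"
    show "(\<lambda>n. l k * (real k / real m)^n) \<longlonglongrightarrow> (if k = m then l m else 0)"
    proof (cases "k < m")
      case True
      have "norm (real k / real m) < 1" using True m1 k by (simp add: field_simps)
      then have "(\<lambda>n. (real k / real m)^n) \<longlonglongrightarrow> 0" by (rule LIMSEQ_power_zero)
      then show ?thesis using True by (simp add: tendsto_mult_right_zero)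
    next
      case False
      show ?thesis
      proof (cases "k = m")
        case True
        then show ?thesis using m1 by simp
      next
        case False
        then have "l k = 0" using big[OF k] \<open>\<not> k < m\<close> by simp
        then show ?thesis using False by simp
      qed
    qed
  qed
  have "(\<Sum>k\<in>{1..K}. if k = m then l m else 0) = l m" using m1 by simp
  with lim have lim': "(\<lambda>n. \<Sum>k\<in>{1..K}. l k * (real k / real m)^n) \<longlonglongrightarrow> l m" by simp
  have "eventually (\<lambda>n. (\<Sum>k\<in>{1..K}. l k * (real k / real m)^n) \<noteq> 0) sequentially"
    by (rule tendsto_imp_eventually_ne[OF lim' m1(3)])
  then obtain N where N: "\<And>n. n \<ge> N \<Longrightarrow> (\<Sum>k\<in>{1..K}. l k * (real k / real m)^n) \<noteq> 0"
    unfolding eventually_sequentially by blast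
  have eq: "(\<Sum>k=1..K. l k * real k ^ n) = real m ^ n * (\<Sum>k\<in>{1..K}. l k * (real k / real m)^n)" for n
    using m1 by (simp add: sum_distrib_left power_divide field_simps)
  show ?thesis
  proof (intro exI allI impI)
    fix n assume "n \<ge> N"
    then show "(\<Sum>k=1..K. l k * real k ^ n) \<noteq> 0" using eq[of n] N[of n] m1 by simp
  qed
qed

lemma poly_from_zero:
  fixes rho :: "real \<Rightarrow> real" and l :: "nat \<Rightarrow> real"
  assumes an: "real_analytic_on rho {\<alpha><..<\<beta>}"
    and c: "c \<in> {\<alpha><..<\<beta>}" and r: "r > 0" and K: "K \<ge> 1"
    and k0: "k0 \<in> {1..K}" "l k0 \<noteq> 0"
    and zero: "\<And>w. \<bar>w\<bar> < r \<Longrightarrow> (\<Sum>k=1..K. l k * rho (c + real k * w)) = 0"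
  shows "polynomial_on rho {\<alpha><..<\<beta>}"
proof -
  obtain R a where R: "R > 0" "\<forall>y. \<bar>y - c\<bar> < R \<longrightarrow> (\<lambda>n. a n * (y - c)^n) sums rho y"
    using ra_get[OF an c] by metis
  define d where "d = min r (R / real K)"
  have d0: "d > 0" using r R K unfolding d_def by simp
  define P where "P n = (\<Sum>k=1..K. l k * real k ^ n)" for n
  have sm: "(\<lambda>n. (a n * P n) * w^n) sums 0" if w: "\<bar>w\<bar> < d" for w
  proof -
    have "(\<lambda>n. \<Sum>k\<in>{1..K}. l k * (a n * (c + real k * w - c)^n)) sums (\<Sum>k\<in>{1..K}. l k * rho (c + real k * w))"
    proof (rule sums_sum, rule sums_mult)
      fix k assume k: "k \<in> {1..K}"
      have "real k * \<bar>w\<bar> \<le> real K * \<bar>w\<bar>" using k by (intro mult_right_mono) auto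
      also have "real K * \<bar>w\<bar> < R" using w K unfolding d_def by (simp add: field_simps)
      finally have "\<bar>c + real k * w - c\<bar> < R" by (simp add: abs_mult)
      then show "(\<lambda>n. a n * (c + real k * w - c)^n) sums rho (c + real k * w)"
        by (rule mp[OF spec[OF R(2)]])
    qed
    moreover have "(\<Sum>k\<in>{1..K}. l k * rho (c + real k * w)) = 0" using zero w unfolding d_def by simp
    moreover have "(\<Sum>k\<in>{1..K}. l k * (a n * (c + real k * w - c)^n)) = (a n * P n) * w^n" for n
      unfolding P_def by (simp add: sum_distrib_left sum_distrib_right power_mult_distrib algebra_simps)
    ultimately show ?thesis by simp
  qed
  have aP: "a n * P n = 0" for n by (rule powser_unique0[OF d0 sm])
  obtain N where N: "\<forall>n\<ge>N. P n \<noteq> 0" using P_eventually[of k0 K l, OF k0] unfolding P_def by blast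
  have aN: "a n = 0" if "n \<ge> N" for n using aP[of n] N that by simp
  define q where "q = (\<Sum>n<N. smult (a n) ([:-c, 1:]^n))"
  have pq: "poly q y = (\<Sum>n<N. a n * (y - c)^n)" for y by (simp add: q_def poly_sum)
  have near: "rho y = poly q y" if "\<bar>y - c\<bar> < R" for y
  proof -
    have "(\<lambda>n. a n * (y - c)^n) sums (\<Sum>n\<in>{..<N}. a n * (y - c)^n)"
      by (rule sums_finite) (auto simp: aN)
    moreover have "(\<lambda>n. a n * (y - c)^n) sums rho y" using R(2) that by simp
    ultimately show ?thesis using pq sums_unique2 by metis
  qed
  define g where "g y = rho y + (-1) * poly q y" for y
  have ag: "real_analytic_on g {\<alpha><..<\<beta>}" unfolding g_def
    by (intro ra_add ra_cmult an ra_poly)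
  from analytic_dichotomy[OF ag]
  show ?thesis
  proof
    assume "\<forall>x\<in>{\<alpha><..<\<beta>}. g x = 0"
    then have "\<forall>x\<in>{\<alpha><..<\<beta>}. rho x = poly q x" unfolding g_def by simp
    then show ?thesis unfolding polynomial_on_def by blast
  next
    assume cnt: "countable {x\<in>{\<alpha><..<\<beta>}. g x = 0}"
    define e where "e = min R (min (c - \<alpha>) (\<beta> - c))"
    have e0: "e > 0" using R c unfolding e_def by simp
    have "{c - e<..<c + e} \<subseteq> {x\<in>{\<alpha><..<\<beta>}. g x = 0}"
    proof
      fix y assume y: "y \<in> {c - e<..<c + e}"
      then have "\<bar>y - c\<bar> < R" "y \<in> {\<alpha><..<\<beta>}" unfolding e_def by auto
      then show "y \<in> {x\<in>{\<alpha><..<\<beta>}. g x = 0}" using near unfolding g_def by simp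
    qed
    then have "countable {c - e<..<c + e}" using cnt countable_subset by blast
    moreover have "uncountable {c - e<..<c + e}" using e0 uncountable_open_interval by simp
    ultimately show ?thesis by blast
  qed
qed

theorem lemma3:
  fixes K :: nat and rho :: "real \<Rightarrow> real" and \<alpha> \<beta> :: real
  assumes "K \<ge> 1"
    and "\<beta> > \<alpha>"
    and "real_analytic_on rho {\<alpha><..<\<beta>}"
    and "\<not> polynomial_on rho {\<alpha><..<\<beta>}"
  shows "\<exists>w0. w0 \<in> {-((\<beta> - \<alpha>) / (2 * K))<..<(\<beta> - \<alpha>) / (2 * K)} \<and>
           rationally_independent K (\<lambda>k. rho ((\<alpha> + \<beta>) / 2 + real k * w0))"
proof -
  note K = assms(1) and ab = assms(2) and an = assms(3) and np = assms(4)
  define c where "c = (\<alpha> + \<beta>) / 2"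
  define r where "r = (\<beta> - \<alpha>) / (2 * real K)"
  define T where "T = {-r<..<r}"
  have r0: "r > 0" using K ab unfolding r_def by simp
  have Kr: "real K * r = (\<beta> - \<alpha>) / 2" using K unfolding r_def by (simp add: field_simps)
  have inS: "c + real k * w \<in> {\<alpha><..<\<beta>}" if k: "k \<in> {1..K}" and w: "w \<in> T" for k w
  proof -
    have "\<bar>real k * w\<bar> \<le> real K * \<bar>w\<bar>" using k by (simp add: abs_mult mult_right_mono)
    also have "real K * \<bar>w\<bar> < real K * r" using w K unfolding T_def by (simp add: abs_less_iff)
    finally have "\<bar>real k * w\<bar> < (\<beta> - \<alpha>) / 2" using Kr by simp
    then show ?thesis unfolding c_def by (auto simp: abs_less_iff field_simps)
  qed
  have cab: "c \<in> {\<alpha><..<\<beta>}" using ab unfolding c_def by simp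
  define F where "F l w = (\<Sum>k=1..K. l k * rho (c + real k * w))" for l :: "nat \<Rightarrow> real" and w
  define Lam :: "(nat \<Rightarrow> real) set" where "Lam = (Pi\<^sub>E {1..K} (\<lambda>_. \<rat>)) - {l. \<forall>k\<in>{1..K}. l k = 0}"
  have cntL: "countable Lam" unfolding Lam_def
    by (rule countable_subset[OF Diff_subset countable_PiE]) (auto simp: countable_rat)
  have key: "countable {w\<in>T. F l w = 0}" if nz: "k0 \<in> {1..K}" "l k0 \<noteq> 0" for l k0
  proof -
    have "real_analytic_on (F l) T" unfolding F_def
    proof (rule ra_sum)
      fix k assume k: "k \<in> {1..K}"
      have "real_analytic_on (\<lambda>w. rho (c + real k * w)) T"
        by (rule ra_affine[OF an]) (use k inS in auto)
      then show "real_analytic_on (\<lambda>w. l k * rho (c + real k * w)) T" by (rule ra_cmult)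
    qed simp
    then have "(\<forall>x\<in>T. F l x = 0) \<or> countable {x\<in>T. F l x = 0}"
      unfolding T_def by (rule analytic_dichotomy)
    moreover have "\<not> (\<forall>x\<in>T. F l x = 0)"
    proof
      assume z: "\<forall>x\<in>T. F l x = 0"
      have "polynomial_on rho {\<alpha><..<\<beta>}"
      proof (rule poly_from_zero[of rho \<alpha> \<beta> c r K k0 l, OF an cab r0 K nz])
        fix w :: real assume "\<bar>w\<bar> < r"
        then have "w \<in> T" unfolding T_def by auto
        then show "(\<Sum>k=1..K. l k * rho (c + real k * w)) = 0" using z unfolding F_def by blast
      qed
      then show False using np by simp
    qed
    ultimately show ?thesis by blast
  qed
  define B where "B = (\<Union>l\<in>Lam. {w\<in>T. F l w = 0})"
  have "countable B" unfolding B_def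
  proof (rule countable_UN[OF cntL])
    fix l assume "l \<in> Lam"
    then obtain k0 where "k0 \<in> {1..K}" "l k0 \<noteq> 0" unfolding Lam_def by blast
    then show "countable {w\<in>T. F l w = 0}" by (rule key)
  qed
  moreover have "uncountable T" unfolding T_def using r0 uncountable_open_interval by simp
  ultimately obtain w0 where w0: "w0 \<in> T" "w0 \<notin> B"
    by (metis countable_subset subsetI)
  show ?thesis
  proof (intro exI conjI)
    show "w0 \<in> {-((\<beta> - \<alpha>) / (2 * K))<..<(\<beta> - \<alpha>) / (2 * K)}" using w0(1) unfolding T_def r_def by simp
    show "rationally_independent K (\<lambda>k. rho ((\<alpha> + \<beta>) / 2 + real k * w0))"
      unfolding rationally_independent_def
    proof (intro allI impI ballI)
      fix l :: "nat \<Rightarrow> real" and k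
      assume h: "(\<forall>k\<in>{1..K}. l k \<in> \<rat>) \<and> (\<Sum>k = 1..K. l k * rho ((\<alpha> + \<beta>) / 2 + real k * w0)) = 0"
        and k: "k \<in> {1..K}"
      show "l k = 0"
      proof (rule ccontr)
        assume lk: "l k \<noteq> 0"
        define l' where "l' = restrict l {1..K}"
        have "l' \<in> Lam" unfolding Lam_def l'_def using h lk k by auto
        moreover have "F l' w0 = 0"
        proof -
          have "F l' w0 = (\<Sum>k = 1..K. l k * rho ((\<alpha> + \<beta>) / 2 + real k * w0))"
            unfolding F_def l'_def c_def by (rule sum.cong) auto
          then show ?thesis using h by simp
        qed
        ultimately have "w0 \<in> B" unfolding B_def using w0(1) by blast
        then show False using w0(2) by simp
      qed
    qed
  qed
qed

end
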